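(* Let $\mu,\nu\in\mathbb{R}$ and $\sigma\in\mathbb{R}\setminus\{0\}$. On smooth functions $\Phi(x,t)$ on $\mathbb{R}^2$ define $$P=\partial_x,\quad H=\partial_t,\quad K=-\nu t\,\frac{e^{\sigma\partial_x}-1}{\sigma}-\mu x\,e^{-\sigma\partial_x}\partial_t,\quad D=-x\,\frac{1-e^{-\sigma\partial_x}}{\sigma}-t\partial_t,$$ $$C_1=(\mu x^2e^{-2\sigma\partial_x}+\nu t^2)\partial_t+2\nu xt\,\frac{1-e^{-\sigma\partial_x}}{\sigma}-\sigma\mu x\,e^{-2\sigma\partial_x}\partial_t,$$ $$C_2=-(\mu x^2e^{-\sigma\partial_x}+\nu t^2)\frac{e^{\sigma\partial_x}-1}{\sigma}-2\mu xt\,\partial_t-\sigma\mu(t\partial_t+t^2\partial_t^2),$$ where $e^{a\partial_x}$ is the shift $\Phi(x,t)\mapsto\Phi(x+a,t)$ and $x,t$ denote multiplication operators. Then these operators satisfy the relations $[K,H]=\nu\frac{e^{\sigma P}-1}{\sigma}$, $[K,P]=\mu e^{-\sigma P}H$, $[H,P]=0$, $[K,D]=0$, $[D,H]=H$, $[D,C_1]=-C_1$, $[H,C_1]=-2\nu D$, $[D,P]=\frac{1-e^{-\sigma P}}{\sigma}$, $[D,C_2]=-C_2-\sigma\mu D^2$, $[P,C_2]=2\mu D$, $[K,C_1]=\nu C_2+\sigma\mu\nu D^2$, $[K,C_2]=\mu C_1$, $[P,C_1]=-e^{-\sigma P}K-Ke^{-\sigma P}$, $[H,C_2]=2K+\sigma\mu(DH+HD)$,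 $[C_1,C_2]=-\sigma\mu(DC_1+C_1D)$. Moreover, with $$E_\sigma=\nu\Big(\frac{e^{\sigma\partial_x}-1}{\sigma}\Big)^2-\mu\,\partial_t^2,$$ one has $[E_\sigma,X]=0$ for $X\in\{K,P,H\}$, $[E_\sigma,D]=-2E_\sigma$, $[E_\sigma,C_1]=4\nu t\,E_\sigma$ and $[E_\sigma,C_2]=-4\mu(x+\sigma+\sigma t\partial_t)E_\sigma$. In particular each of these operators maps solutions of $E_\sigma\Phi=0$ to solutions. *)

theory Defs
  imports "HOL-Analysis.Analysis"
begin

type_synonym fn = "real \<times> real \<Rightarrow> real"
type_synonym op = "fn \<Rightarrow> fn"

definition Dx :: op where
  "Dx \<Phi> = (\<lambda>(x, t). deriv (\<lambda>y. \<Phi> (y, t)) x)"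
definition Dt :: op where
  "Dt \<Phi> = (\<lambda>(x, t). deriv (\<lambda>s. \<Phi> (x, s)) t)"

text \<open>Shift operator e^{a d/dx}: Phi(x,t) |-> Phi(x+a,t).\<close>
definition Sh :: "real \<Rightarrow> op" where
  "Sh a \<Phi> = (\<lambda>(x, t). \<Phi> (x + a, t))"

definition mul :: "(real \<times> real \<Rightarrow> real) \<Rightarrow> op" where
  "mul f \<Phi> = (\<lambda>p. f p * \<Phi> p)"
definition X :: op where "X = mul fst"
definition T :: op where "T = mul snd"

definition oadd :: "op \<Rightarrow> op \<Rightarrow> op" (infixl "\<oplus>" 65) where
  "A \<oplus> B = (\<lambda>\<Phi> p. A \<Phi> p + B \<Phi> p)"
definition osub :: "op \<Rightarrow> op \<Rightarrow> op" (infixl "\<ominus>" 65) where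
  "A \<ominus> B = (\<lambda>\<Phi> p. A \<Phi> p - B \<Phi> p)"
definition sc :: "real \<Rightarrow> op \<Rightarrow> op" where
  "sc c A = (\<lambda>\<Phi> p. c * A \<Phi> p)"
definition ocomp :: "op \<Rightarrow> op \<Rightarrow> op" (infixl "\<odot>" 70) where
  "A \<odot> B = (\<lambda>\<Phi>. A (B \<Phi>))"
definition comm :: "op \<Rightarrow> op \<Rightarrow> op" where
  "comm A B = A \<odot> B \<ominus> B \<odot> A"

definition pder :: "bool list \<Rightarrow> op" where
  "pder w = foldr (\<lambda>b A. (if b then Dx else Dt) \<odot> A) w id"
definition smooth2 :: "fn \<Rightarrow> bool" where
  "smooth2 \<Phi> \<longleftrightarrow> (\<forall>w p. pder w \<Phi> differentiable (at p))"

definition eq_sm :: "op \<Rightarrow> op \<Rightarrow> bool" (infix "\<doteq>" 50) where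
  "A \<doteq> B \<longleftrightarrow> (\<forall>\<Phi>. smooth2 \<Phi> \<longrightarrow> A \<Phi> = B \<Phi>)"

definition opP :: op where "opP = Dx"
definition opH :: op where "opH = Dt"
definition opK :: "real \<Rightarrow> real \<Rightarrow> real \<Rightarrow> op" where
  "opK \<mu> \<nu> \<sigma> = sc (- \<nu> / \<sigma>) (T \<odot> (Sh \<sigma> \<ominus> id)) \<ominus> sc \<mu> (X \<odot> Sh (- \<sigma>) \<odot> Dt)"
definition opD :: "real \<Rightarrow> op" where
  "opD \<sigma> = sc (- 1 / \<sigma>) (X \<odot> (id \<ominus> Sh (- \<sigma>))) \<ominus> T \<odot> Dt"
definition opC1 :: "real \<Rightarrow> real \<Rightarrow> real \<Rightarrow> op" where
  "opC1 \<mu> \<nu> \<sigma> =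
     (sc \<mu> (X \<odot> X \<odot> Sh (- 2 * \<sigma>)) \<oplus> sc \<nu> (T \<odot> T)) \<odot> Dt
     \<oplus> sc (2 * \<nu> / \<sigma>) (X \<odot> T \<odot> (id \<ominus> Sh (- \<sigma>)))
     \<ominus> sc (\<sigma> * \<mu>) (X \<odot> Sh (- 2 * \<sigma>) \<odot> Dt)"
definition opC2 :: "real \<Rightarrow> real \<Rightarrow> real \<Rightarrow> op" where
  "opC2 \<mu> \<nu> \<sigma> =
     sc (- 1 / \<sigma>) ((sc \<mu> (X \<odot> X \<odot> Sh (- \<sigma>)) \<oplus> sc \<nu> (T \<odot> T)) \<odot> (Sh \<sigma> \<ominus> id))
     \<ominus> sc (2 * \<mu>) (X \<odot> T \<odot> Dt)
     \<ominus> sc (\<sigma> * \<mu>) (T \<odot> Dt \<oplus> T \<odot> T \<odot> Dt \<odot> Dt)"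
definition opE :: "real \<Rightarrow> real \<Rightarrow> real \<Rightarrow> op" where
  "opE \<mu> \<nu> \<sigma> = sc (\<nu> / \<sigma>^2) ((Sh \<sigma> \<ominus> id) \<odot> (Sh \<sigma> \<ominus> id)) \<ominus> sc \<mu> (Dt \<odot> Dt)"

end

theory Submission
  imports Defs
begin


lemma pder_snoc: "pder (w @ [b]) F = pder w ((if b then Dx else Dt) F)"
  by (induction w) (auto simp: pder_def ocomp_def)

lemma smooth2_iff:
  "smooth2 F \<longleftrightarrow> (\<forall>p. F differentiable (at p)) \<and> smooth2 (Dx F) \<and> smooth2 (Dt F)"
proof
  assume s: "smooth2 F"
  have "pder [] F = F" by (simp add: pder_def)
  moreover have "\<And>w. pder w (Dx F) = pder (w @ [True]) F" "\<And>w. pder w (Dt F) = pder (w @ [False]) F"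
    by (simp_all add: pder_snoc)
  ultimately show "(\<forall>p. F differentiable (at p)) \<and> smooth2 (Dx F) \<and> smooth2 (Dt F)"
    using s unfolding smooth2_def by metis
next
  assume r: "(\<forall>p. F differentiable (at p)) \<and> smooth2 (Dx F) \<and> smooth2 (Dt F)"
  show "smooth2 F" unfolding smooth2_def
  proof (intro allI)
    fix w p
    show "pder w F differentiable (at p)"
    proof (cases w rule: rev_exhaust)
      case Nil then show ?thesis using r by (cases p) (simp add: pder_def)
    next
      case (snoc v b) then show ?thesis using r unfolding smooth2_def
        by (cases b; cases p) (simp_all add: pder_snoc)
    qed
  qed
qed

lemma smooth2_coind:
  assumes "S F" and "\<And>G. S G \<Longrightarrow> (\<forall>p. G differentiable (at p)) \<and> S (Dx G) \<and> S (Dt G)"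
  shows "smooth2 F"
proof -
  have "\<forall>G. S G \<longrightarrow> pder w G differentiable (at p)" for w p
  proof (induction w rule: rev_induct)
    case Nil then show ?case using assms(2) by (cases p) (auto simp add: pder_def)
  next
    case (snoc b w) then show ?case using assms(2) by (cases b) (simp_all add: pder_snoc)
  qed
  then show ?thesis using assms(1) unfolding smooth2_def by blast
qed

lemma sm_diff: "smooth2 F \<Longrightarrow> F differentiable (at p)"
  using smooth2_iff by blast
lemma sm_Dx: "smooth2 F \<Longrightarrow> smooth2 (Dx F)"
  using smooth2_iff by blast
lemma sm_Dt: "smooth2 F \<Longrightarrow> smooth2 (Dt F)"
  using smooth2_iff by blast

lemma has_Dt:
  assumes "\<And>p. F differentiable (at p)"
  shows "((\<lambda>s. F (x, s)) has_real_derivative Dt F (x, t)) (at t)"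
proof -
  have "(\<lambda>s. F (Pair x s)) differentiable (at t)"
    by (rule differentiable_compose[OF assms]) (auto intro!: derivative_intros)
  then show ?thesis unfolding Dt_def by (simp add: DERIV_deriv_iff_real_differentiable)
qed

lemma has_Dx:
  assumes "\<And>p. F differentiable (at p)"
  shows "((\<lambda>y. F (y, t)) has_real_derivative Dx F (x, t)) (at x)"
proof -
  have "(\<lambda>y. F (Pair y t)) differentiable (at x)"
    by (rule differentiable_compose[OF assms]) (auto intro!: derivative_intros)
  then show ?thesis unfolding Dx_def by (simp add: DERIV_deriv_iff_real_differentiable)
qed

lemma Dt_pt: "Dt F (x, t) = deriv (\<lambda>s. F (x, s)) t" by (simp add: Dt_def)
lemma Dx_pt: "Dx F (x, t) = deriv (\<lambda>y. F (y, t)) x" by (simp add: Dx_def)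

definition dif :: "fn \<Rightarrow> bool" where "dif F \<longleftrightarrow> (\<forall>p. F differentiable (at p))"

lemma dif_sm: "smooth2 F \<Longrightarrow> dif F" by (simp add: dif_def sm_diff)

lemma dt_add: "dif F \<Longrightarrow> dif G \<Longrightarrow> Dt (\<lambda>p. F p + G p) = (\<lambda>p. Dt F p + Dt G p)"
  unfolding dif_def by (intro ext, clarsimp simp: Dt_pt[symmetric], subst Dt_pt,
     rule DERIV_imp_deriv, auto intro!: derivative_eq_intros has_Dt)
lemma dt_sub: "dif F \<Longrightarrow> dif G \<Longrightarrow> Dt (\<lambda>p. F p - G p) = (\<lambda>p. Dt F p - Dt G p)"
  unfolding dif_def by (intro ext, clarsimp simp: Dt_pt[symmetric], subst Dt_pt,
     rule DERIV_imp_deriv, auto intro!: derivative_eq_intros has_Dt)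
lemma dt_cmult: "dif F \<Longrightarrow> Dt (\<lambda>p. c * F p) = (\<lambda>p. c * Dt F p)"
  unfolding dif_def by (intro ext, clarsimp simp: Dt_pt[symmetric], subst Dt_pt,
     rule DERIV_imp_deriv, auto intro!: derivative_eq_intros has_Dt)
lemma dt_fst: "dif F \<Longrightarrow> Dt (\<lambda>p. fst p * F p) = (\<lambda>p. fst p * Dt F p)"
  unfolding dif_def by (intro ext, clarsimp simp: Dt_pt[symmetric], subst Dt_pt,
     rule DERIV_imp_deriv, auto intro!: derivative_eq_intros has_Dt)
lemma dt_snd: "dif F \<Longrightarrow> Dt (\<lambda>p. snd p * F p) = (\<lambda>p. F p + snd p * Dt F p)"
  unfolding dif_def by (intro ext, clarsimp simp: Dt_pt[symmetric], subst Dt_pt,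
     rule DERIV_imp_deriv, auto intro!: derivative_eq_intros has_Dt)
lemma dx_add: "dif F \<Longrightarrow> dif G \<Longrightarrow> Dx (\<lambda>p. F p + G p) = (\<lambda>p. Dx F p + Dx G p)"
  unfolding dif_def by (intro ext, clarsimp simp: Dx_pt[symmetric], subst Dx_pt,
     rule DERIV_imp_deriv, auto intro!: derivative_eq_intros has_Dx)
lemma dx_sub: "dif F \<Longrightarrow> dif G \<Longrightarrow> Dx (\<lambda>p. F p - G p) = (\<lambda>p. Dx F p - Dx G p)"
  unfolding dif_def by (intro ext, clarsimp simp: Dx_pt[symmetric], subst Dx_pt,
     rule DERIV_imp_deriv, auto intro!: derivative_eq_intros has_Dx)
lemma dx_cmult: "dif F \<Longrightarrow> Dx (\<lambda>p. c * F p) = (\<lambda>p. c * Dx F p)"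
  unfolding dif_def by (intro ext, clarsimp simp: Dx_pt[symmetric], subst Dx_pt,
     rule DERIV_imp_deriv, auto intro!: derivative_eq_intros has_Dx)
lemma dx_snd: "dif F \<Longrightarrow> Dx (\<lambda>p. snd p * F p) = (\<lambda>p. snd p * Dx F p)"
  unfolding dif_def by (intro ext, clarsimp simp: Dx_pt[symmetric], subst Dx_pt,
     rule DERIV_imp_deriv, auto intro!: derivative_eq_intros has_Dx)
lemma dx_fst: "dif F \<Longrightarrow> Dx (\<lambda>p. fst p * F p) = (\<lambda>p. F p + fst p * Dx F p)"
  unfolding dif_def by (intro ext, clarsimp simp: Dx_pt[symmetric], subst Dx_pt,
     rule DERIV_imp_deriv, auto intro!: derivative_eq_intros has_Dx)

lemma dt_Sh: "Dt (Sh a F) = Sh a (Dt F)"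
  by (auto simp: Dt_def Sh_def fun_eq_iff)

lemma dx_Sh: "Dx (Sh a F) = Sh a (Dx F)"
proof -
  have "deriv (\<lambda>y. F (y + a, t)) x = deriv (\<lambda>y. F (y, t)) (x + a)" for x t
    unfolding deriv_def using DERIV_shift[of "\<lambda>y. F (y, t)" _ x a] by simp
  then show ?thesis by (auto simp: Dx_def Sh_def fun_eq_iff)
qed

lemma sm_add: "smooth2 F \<Longrightarrow> smooth2 G \<Longrightarrow> smooth2 (\<lambda>p. F p + G p)"
proof (rule smooth2_coind[where S="\<lambda>H. \<exists>F G. smooth2 F \<and> smooth2 G \<and> H = (\<lambda>p. F p + G p)"])
  fix H assume "\<exists>F G. smooth2 F \<and> smooth2 G \<and> H = (\<lambda>p. F p + G p)"
  then obtain F G where h: "smooth2 F" "smooth2 G" "H = (\<lambda>p. F p + G p)" by blast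
  show "(\<forall>p. H differentiable (at p)) \<and> (\<exists>F G. smooth2 F \<and> smooth2 G \<and> Dx H = (\<lambda>p. F p + G p))
        \<and> (\<exists>F G. smooth2 F \<and> smooth2 G \<and> Dt H = (\<lambda>p. F p + G p))"
    using h by (auto simp: dx_add dt_add dif_sm intro!: differentiable_add intro: sm_diff sm_Dx sm_Dt)
qed auto

lemma sm_sub: "smooth2 F \<Longrightarrow> smooth2 G \<Longrightarrow> smooth2 (\<lambda>p. F p - G p)"
proof (rule smooth2_coind[where S="\<lambda>H. \<exists>F G. smooth2 F \<and> smooth2 G \<and> H = (\<lambda>p. F p - G p)"])
  fix H assume "\<exists>F G. smooth2 F \<and> smooth2 G \<and> H = (\<lambda>p. F p - G p)"
  then obtain F G where h: "smooth2 F" "smooth2 G" "H = (\<lambda>p. F p - G p)" by blast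
  show "(\<forall>p. H differentiable (at p)) \<and> (\<exists>F G. smooth2 F \<and> smooth2 G \<and> Dx H = (\<lambda>p. F p - G p))
        \<and> (\<exists>F G. smooth2 F \<and> smooth2 G \<and> Dt H = (\<lambda>p. F p - G p))"
    using h by (auto simp: dx_sub dt_sub dif_sm intro!: differentiable_diff intro: sm_diff sm_Dx sm_Dt)
qed auto

lemma sm_cmult: "smooth2 F \<Longrightarrow> smooth2 (\<lambda>p. c * F p)"
proof (rule smooth2_coind[where S="\<lambda>H. \<exists>F. smooth2 F \<and> H = (\<lambda>p. c * F p)"])
  fix H assume "\<exists>F. smooth2 F \<and> H = (\<lambda>p. c * F p)"
  then obtain F where h: "smooth2 F" "H = (\<lambda>p. c * F p)" by blast
  show "(\<forall>p. H differentiable (at p)) \<and> (\<exists>F. smooth2 F \<and> Dx H = (\<lambda>p. c * F p))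
        \<and> (\<exists>F. smooth2 F \<and> Dt H = (\<lambda>p. c * F p))"
    using h by (auto simp: dx_cmult dt_cmult dif_sm intro!: sm_Dx sm_Dt sm_diff differentiable_mult)
qed auto

lemma sm_zero: "smooth2 (\<lambda>p. 0)"
proof -
  have "smooth2 (\<lambda>p. 0 * fst p)"
  proof (rule smooth2_coind[where S="\<lambda>H. H = (\<lambda>p. 0)"])
    have "Dx (\<lambda>p. 0) = (\<lambda>p. 0)" "Dt (\<lambda>p. 0) = (\<lambda>p. 0)" by (auto simp: Dx_def Dt_def fun_eq_iff)
    then show "\<And>G. G = (\<lambda>p. 0) \<Longrightarrow> (\<forall>p. G differentiable at p) \<and> Dx G = (\<lambda>p. 0) \<and> Dt G = (\<lambda>p. 0)"
      by auto
  qed auto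
  then show ?thesis by simp
qed

lemma sm_fst: "smooth2 F \<Longrightarrow> smooth2 (\<lambda>p. fst p * F p)"
proof (rule smooth2_coind[where S="\<lambda>H. \<exists>F G. smooth2 F \<and> smooth2 G \<and> H = (\<lambda>p. fst p * F p + G p)"])
  assume "smooth2 F"
  then show "\<exists>Fa G. smooth2 Fa \<and> smooth2 G \<and> (\<lambda>p. fst p * F p) = (\<lambda>p. fst p * Fa p + G p)"
    using sm_zero by fastforce
next
  fix H assume "\<exists>F G. smooth2 F \<and> smooth2 G \<and> H = (\<lambda>p. fst p * F p + G p)"
  then obtain F G where h: "smooth2 F" "smooth2 G" "H = (\<lambda>p. fst p * F p + G p)" by blast
  have d: "dif (\<lambda>p. fst p * F p)" using h unfolding dif_def
    by (auto intro!: differentiable_mult sm_diff[OF h(1)] bounded_linear_imp_differentiable[OF bounded_linear_fst] bounded_linear_imp_differentiable[OF bounded_linear_snd])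
  have "Dx H = (\<lambda>p. fst p * Dx F p + (F p + Dx G p))" "Dt H = (\<lambda>p. fst p * Dt F p + Dt G p)"
    using h(1,2) d unfolding h(3) by (simp_all add: dx_add dt_add dx_fst dt_fst dif_sm) (auto simp: fun_eq_iff)
  then show "(\<forall>p. H differentiable (at p)) \<and> (\<exists>F G. smooth2 F \<and> smooth2 G \<and> Dx H = (\<lambda>p. fst p * F p + G p))
        \<and> (\<exists>F G. smooth2 F \<and> smooth2 G \<and> Dt H = (\<lambda>p. fst p * F p + G p))"
  proof (intro conjI allI)
    fix p show "H differentiable (at p)" unfolding h(3) using d sm_diff[OF h(2)] unfolding dif_def by (intro differentiable_add; cases p) auto
  next
    show "\<exists>F G. smooth2 F \<and> smooth2 G \<and> Dx H = (\<lambda>p. fst p * F p + G p)"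
      using h \<open>Dx H = _\<close> by (intro exI[of _ "Dx F"] exI[of _ "(\<lambda>p. F p + Dx G p)"]) (auto intro: sm_Dx sm_Dt sm_add)
  next
    show "\<exists>F G. smooth2 F \<and> smooth2 G \<and> Dt H = (\<lambda>p. fst p * F p + G p)"
      using h \<open>Dt H = _\<close> by (intro exI[of _ "Dt F"] exI[of _ "Dt G"]) (auto intro: sm_Dx sm_Dt sm_add)
  qed
qed

lemma sm_snd: "smooth2 F \<Longrightarrow> smooth2 (\<lambda>p. snd p * F p)"
proof (rule smooth2_coind[where S="\<lambda>H. \<exists>F G. smooth2 F \<and> smooth2 G \<and> H = (\<lambda>p. snd p * F p + G p)"])
  assume "smooth2 F"
  then show "\<exists>Fa G. smooth2 Fa \<and> smooth2 G \<and> (\<lambda>p. snd p * F p) = (\<lambda>p. snd p * Fa p + G p)"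
    using sm_zero by fastforce
next
  fix H assume "\<exists>F G. smooth2 F \<and> smooth2 G \<and> H = (\<lambda>p. snd p * F p + G p)"
  then obtain F G where h: "smooth2 F" "smooth2 G" "H = (\<lambda>p. snd p * F p + G p)" by blast
  have d: "dif (\<lambda>p. snd p * F p)" using h unfolding dif_def
    by (auto intro!: differentiable_mult sm_diff[OF h(1)] bounded_linear_imp_differentiable[OF bounded_linear_fst] bounded_linear_imp_differentiable[OF bounded_linear_snd])
  have "Dt H = (\<lambda>p. snd p * Dt F p + (F p + Dt G p))" "Dx H = (\<lambda>p. snd p * Dx F p + Dx G p)"
    using h(1,2) d unfolding h(3) by (simp_all add: dx_add dt_add dx_snd dt_snd dif_sm) (auto simp: fun_eq_iff)
  then show "(\<forall>p. H differentiable (at p)) \<and> (\<exists>F G. smooth2 F \<and> smooth2 G \<and> Dx H = (\<lambda>p. snd p * F p + G p))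
        \<and> (\<exists>F G. smooth2 F \<and> smooth2 G \<and> Dt H = (\<lambda>p. snd p * F p + G p))"
  proof (intro conjI allI)
    fix p show "H differentiable (at p)" unfolding h(3) using d sm_diff[OF h(2)] unfolding dif_def by (intro differentiable_add; cases p) auto
  next
    show "\<exists>F G. smooth2 F \<and> smooth2 G \<and> Dx H = (\<lambda>p. snd p * F p + G p)"
      using h \<open>Dx H = _\<close> by (intro exI[of _ "Dx F"] exI[of _ "Dx G"]) (auto intro: sm_Dx sm_Dt sm_add)
  next
    show "\<exists>F G. smooth2 F \<and> smooth2 G \<and> Dt H = (\<lambda>p. snd p * F p + G p)"
      using h \<open>Dt H = _\<close> by (intro exI[of _ "Dt F"] exI[of _ "(\<lambda>p. F p + Dt G p)"]) (auto intro: sm_Dx sm_Dt sm_add)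
  qed
qed

lemma sm_Sh: "smooth2 F \<Longrightarrow> smooth2 (Sh a F)"
proof (rule smooth2_coind[where S="\<lambda>H. \<exists>F. smooth2 F \<and> H = Sh a F"])
  fix G assume "\<exists>F. smooth2 F \<and> G = Sh a F"
  then obtain F where F: "smooth2 F" "G = Sh a F" by blast
  have "Sh a F = F \<circ> (\<lambda>p. p + (a, 0))" by (auto simp: Sh_def fun_eq_iff)
  moreover have "(F \<circ> (\<lambda>p. p + (a, 0))) differentiable (at p)" for p
    by (rule differentiable_chain_at) (auto intro!: derivative_intros sm_diff F)
  ultimately have "\<forall>p. G differentiable (at p)" using F by simp
  then show "(\<forall>p. G differentiable (at p)) \<and> (\<exists>F. smooth2 F \<and> Dx G = Sh a F) \<and> (\<exists>F. smooth2 F \<and> Dt G = Sh a F)"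
    using F by (auto simp only: dx_Sh dt_Sh intro: sm_Dx sm_Dt)
qed auto



lemma clairaut_mvt:
  assumes s: "smooth2 f" and h: "h > 0"
  shows "\<exists>\<xi> \<eta>. a < \<xi> \<and> \<xi> < a + h \<and> b < \<eta> \<and> \<eta> < b + h \<and>
     f (a+h, b+h) - f (a+h, b) - f (a, b+h) + f (a, b) = h^2 * Dt (Dx f) (\<xi>, \<eta>)"
    and "\<exists>\<xi> \<eta>. a < \<xi> \<and> \<xi> < a + h \<and> b < \<eta> \<and> \<eta> < b + h \<and>
     f (a+h, b+h) - f (a+h, b) - f (a, b+h) + f (a, b) = h^2 * Dx (Dt f) (\<xi>, \<eta>)"
proof -
  have df: "\<And>p. f differentiable (at p)" using s by (rule sm_diff)
  have dfx: "\<And>p. Dx f differentiable (at p)" using s by (intro sm_diff sm_Dx)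
  have dft: "\<And>p. Dt f differentiable (at p)" using s by (intro sm_diff sm_Dt)
  obtain \<xi> where \<xi>: "a < \<xi>" "\<xi> < a + h"
    "(f (a+h, b+h) - f (a+h, b)) - (f (a, b+h) - f (a, b)) = (a + h - a) * (Dx f (\<xi>, b+h) - Dx f (\<xi>, b))"
    using MVT2[of a "a+h" "\<lambda>y. f (y, b+h) - f (y, b)" "\<lambda>y. Dx f (y, b+h) - Dx f (y, b)"] h
      DERIV_diff[OF has_Dx[OF df] has_Dx[OF df]] by auto
  obtain \<eta> where \<eta>: "b < \<eta>" "\<eta> < b + h"
    "Dx f (\<xi>, b+h) - Dx f (\<xi>, b) = (b + h - b) * Dt (Dx f) (\<xi>, \<eta>)"
    using MVT2[of b "b+h" "\<lambda>r. Dx f (\<xi>, r)" "\<lambda>r. Dt (Dx f) (\<xi>, r)"] h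
    by (auto intro!: has_Dt dfx)
  show "\<exists>\<xi> \<eta>. a < \<xi> \<and> \<xi> < a + h \<and> b < \<eta> \<and> \<eta> < b + h \<and>
     f (a+h, b+h) - f (a+h, b) - f (a, b+h) + f (a, b) = h^2 * Dt (Dx f) (\<xi>, \<eta>)"
    using \<xi> \<eta> by (intro exI[of _ \<xi>] exI[of _ \<eta>]) (simp add: power2_eq_square algebra_simps)
  obtain \<eta>' where \<eta>': "b < \<eta>'" "\<eta>' < b + h"
    "(f (a+h, b+h) - f (a, b+h)) - (f (a+h, b) - f (a, b)) = (b + h - b) * (Dt f (a+h, \<eta>') - Dt f (a, \<eta>'))"
    using MVT2[of b "b+h" "\<lambda>r. f (a+h, r) - f (a, r)" "\<lambda>r. Dt f (a+h, r) - Dt f (a, r)"] h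
      DERIV_diff[OF has_Dt[OF df] has_Dt[OF df]] by auto
  obtain \<xi>' where \<xi>': "a < \<xi>'" "\<xi>' < a + h"
    "Dt f (a+h, \<eta>') - Dt f (a, \<eta>') = (a + h - a) * Dx (Dt f) (\<xi>', \<eta>')"
    using MVT2[of a "a+h" "\<lambda>y. Dt f (y, \<eta>')" "\<lambda>y. Dx (Dt f) (y, \<eta>')"] h
    by (auto intro!: has_Dx dft)
  show "\<exists>\<xi> \<eta>. a < \<xi> \<and> \<xi> < a + h \<and> b < \<eta> \<and> \<eta> < b + h \<and>
     f (a+h, b+h) - f (a+h, b) - f (a, b+h) + f (a, b) = h^2 * Dx (Dt f) (\<xi>, \<eta>)"
    using \<xi>' \<eta>' by (intro exI[of _ \<xi>'] exI[of _ \<eta>']) (simp add: power2_eq_square algebra_simps)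
qed

lemma near: "a < (\<xi>::real) \<Longrightarrow> \<xi> < a + h \<Longrightarrow> b < \<eta> \<Longrightarrow> \<eta> < b + h \<Longrightarrow> dist (\<xi>, \<eta>) (a, b) < 2 * h"
proof -
  assume "a < \<xi>" "\<xi> < a + h" "b < \<eta>" "\<eta> < b + h"
  then have "(\<xi> - a)^2 + (\<eta> - b)^2 \<le> (\<xi> - a + (\<eta> - b))^2"
    using mult_nonneg_nonneg[of "\<xi> - a" "\<eta> - b"] by (simp add: power2_sum)
  then have "sqrt ((\<xi> - a)^2 + (\<eta> - b)^2) \<le> \<xi> - a + (\<eta> - b)"
    using \<open>a < \<xi>\<close> \<open>b < \<eta>\<close> by (simp add: real_le_lsqrt real_sqrt_le_iff)
  then have "dist (\<xi>, \<eta>) (a, b) \<le> dist \<xi> a + dist \<eta> b"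
    using \<open>a < \<xi>\<close> \<open>b < \<eta>\<close> by (simp add: dist_Pair_Pair dist_real_def)
  also have "\<dots> < 2 * h" using \<open>a < \<xi>\<close> \<open>\<xi> < a + h\<close> \<open>b < \<eta>\<close> \<open>\<eta> < b + h\<close> by (simp add: dist_real_def)
  finally show ?thesis .
qed

lemma clairaut:
  assumes s: "smooth2 f"
  shows "Dx (Dt f) = Dt (Dx f)"
proof (rule ext, rule ccontr)
  fix p assume ne: "Dx (Dt f) p \<noteq> Dt (Dx f) p"
  obtain a b where p: "p = (a, b)" by (cases p)
  define d where "d = \<bar>Dx (Dt f) p - Dt (Dx f) p\<bar>"
  have d: "d > 0" using ne by (simp add: d_def)
  have c1: "continuous (at p) (Dx (Dt f))" using s
    by (intro differentiable_imp_continuous_within sm_diff sm_Dx sm_Dt)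
  have c2: "continuous (at p) (Dt (Dx f))" using s
    by (intro differentiable_imp_continuous_within sm_diff sm_Dx sm_Dt)
  obtain e1 where e1: "e1 > 0" "\<And>q. dist q p < e1 \<Longrightarrow> dist (Dx (Dt f) q) (Dx (Dt f) p) < d/2"
    using c1 d unfolding continuous_at_eps_delta by (meson half_gt_zero)
  obtain e2 where e2: "e2 > 0" "\<And>q. dist q p < e2 \<Longrightarrow> dist (Dt (Dx f) q) (Dt (Dx f) p) < d/2"
    using c2 d unfolding continuous_at_eps_delta by (meson half_gt_zero)
  define h where "h = min e1 e2 / 2"
  have h: "h > 0" using e1 e2 by (simp add: h_def)
  obtain \<xi> \<eta> where A: "a < \<xi>" "\<xi> < a + h" "b < \<eta>" "\<eta> < b + h"
     "f (a+h, b+h) - f (a+h, b) - f (a, b+h) + f (a, b) = h^2 * Dt (Dx f) (\<xi>, \<eta>)"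
    using clairaut_mvt(1)[OF s h] by blast
  obtain \<xi>' \<eta>' where B: "a < \<xi>'" "\<xi>' < a + h" "b < \<eta>'" "\<eta>' < b + h"
     "f (a+h, b+h) - f (a+h, b) - f (a, b+h) + f (a, b) = h^2 * Dx (Dt f) (\<xi>', \<eta>')"
    using clairaut_mvt(2)[OF s h] by blast
  have eq: "Dt (Dx f) (\<xi>, \<eta>) = Dx (Dt f) (\<xi>', \<eta>')" using A(5) B(5) h by simp
  have "dist (\<xi>, \<eta>) p < e2" using near[OF A(1-4)] unfolding p h_def by simp
  then have 1: "\<bar>Dt (Dx f) (\<xi>, \<eta>) - Dt (Dx f) p\<bar> < d/2" using e2(2) by (simp add: dist_real_def)
  have "dist (\<xi>', \<eta>') p < e1" using near[OF B(1-4)] unfolding p h_def by simp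
  then have 2: "\<bar>Dx (Dt f) (\<xi>', \<eta>') - Dx (Dt f) p\<bar> < d/2" using e1(2) by (simp add: dist_real_def)
  have g: "\<And>X A B :: real. \<bar>X - B\<bar> < \<bar>A - B\<bar>/2 \<Longrightarrow> \<bar>X - A\<bar> < \<bar>A - B\<bar>/2 \<Longrightarrow> False" by (simp add: abs_if split: if_split_asm)
  show False using g[OF 1[unfolded d_def]] 2[unfolded d_def eq[symmetric]] by blast
qed



lemma X_app: "X F = (\<lambda>p. fst p * F p)" by (simp add: X_def mul_def)
lemma T_app: "T F = (\<lambda>p. snd p * F p)" by (simp add: T_def mul_def)

lemma sm_X[simp]: "smooth2 F \<Longrightarrow> smooth2 (X F)" by (simp add: X_app sm_fst)
lemma sm_T[simp]: "smooth2 F \<Longrightarrow> smooth2 (T F)" by (simp add: T_app sm_snd)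
declare sm_Sh[simp] sm_Dt[simp] sm_Dx[simp] sm_add[simp] sm_sub[simp] sm_cmult[simp]

lemma Dt_add[simp]: "smooth2 F \<Longrightarrow> smooth2 G \<Longrightarrow> Dt (\<lambda>p. F p + G p) = (\<lambda>p. Dt F p + Dt G p)"
  by (simp add: dt_add dif_sm)
lemma Dt_sub[simp]: "smooth2 F \<Longrightarrow> smooth2 G \<Longrightarrow> Dt (\<lambda>p. F p - G p) = (\<lambda>p. Dt F p - Dt G p)"
  by (simp add: dt_sub dif_sm)
lemma Dt_cmult[simp]: "smooth2 F \<Longrightarrow> Dt (\<lambda>p. c * F p) = (\<lambda>p. c * Dt F p)"
  by (simp add: dt_cmult dif_sm)
lemma Dx_add[simp]: "smooth2 F \<Longrightarrow> smooth2 G \<Longrightarrow> Dx (\<lambda>p. F p + G p) = (\<lambda>p. Dx F p + Dx G p)"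
  by (simp add: dx_add dif_sm)
lemma Dx_sub[simp]: "smooth2 F \<Longrightarrow> smooth2 G \<Longrightarrow> Dx (\<lambda>p. F p - G p) = (\<lambda>p. Dx F p - Dx G p)"
  by (simp add: dx_sub dif_sm)
lemma Dx_cmult[simp]: "smooth2 F \<Longrightarrow> Dx (\<lambda>p. c * F p) = (\<lambda>p. c * Dx F p)"
  by (simp add: dx_cmult dif_sm)
lemma Dt_X[simp]: "smooth2 F \<Longrightarrow> Dt (X F) = X (Dt F)"
  by (simp add: X_app dt_fst dif_sm)
lemma Dt_T[simp]: "smooth2 F \<Longrightarrow> Dt (T F) = (\<lambda>p. F p + T (Dt F) p)"
  by (simp add: T_app dt_snd dif_sm)
lemma Dx_X[simp]: "smooth2 F \<Longrightarrow> Dx (X F) = (\<lambda>p. F p + X (Dx F) p)"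
  by (simp add: X_app dx_fst dif_sm)
lemma Dx_T[simp]: "smooth2 F \<Longrightarrow> Dx (T F) = T (Dx F)"
  by (simp add: T_app dx_snd dif_sm)
declare dt_Sh[simp] dx_Sh[simp]
lemma Dx_Dt[simp]: "smooth2 F \<Longrightarrow> Dx (Dt F) = Dt (Dx F)" by (rule clairaut)

lemmas opdefs = oadd_def osub_def sc_def ocomp_def comm_def eq_sm_def
lemmas evdefs = X_app T_app Sh_def

lemma L0:
  fixes \<mu> \<nu> \<sigma> :: real
  assumes "\<sigma> \<noteq> 0"
  defines "P \<equiv> opP" and "H \<equiv> opH" and "K \<equiv> opK \<mu> \<nu> \<sigma>" and "D \<equiv> opD \<sigma>"
      and "C1 \<equiv> opC1 \<mu> \<nu> \<sigma>" and "C2 \<equiv> opC2 \<mu> \<nu> \<sigma>" and "E \<equiv> opE \<mu> \<nu> \<sigma>"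
  shows "(comm K H \<doteq> sc (\<nu> / \<sigma>) (Sh \<sigma> \<ominus> id))"
  unfolding opdefs P_def H_def K_def D_def C1_def C2_def E_def opP_def opH_def opK_def opD_def opC1_def opC2_def opE_def
  apply (intro allI impI)
  apply (simp only: id_apply Dt_add Dt_sub Dt_cmult Dx_add Dx_sub Dx_cmult Dt_X Dt_T Dx_X Dx_T dt_Sh dx_Sh Dx_Dt
     sm_X sm_T sm_Sh sm_Dt sm_Dx sm_add sm_sub sm_cmult)
  apply (rule ext)
  using assms(1) by (clarsimp simp: evdefs; (simp add: field_simps)?; algebra?)

lemma L1:
  fixes \<mu> \<nu> \<sigma> :: real
  assumes "\<sigma> \<noteq> 0"
  defines "P \<equiv> opP" and "H \<equiv> opH" and "K \<equiv> opK \<mu> \<nu> \<sigma>" and "D \<equiv> opD \<sigma>"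
      and "C1 \<equiv> opC1 \<mu> \<nu> \<sigma>" and "C2 \<equiv> opC2 \<mu> \<nu> \<sigma>" and "E \<equiv> opE \<mu> \<nu> \<sigma>"
  shows "(comm K P \<doteq> sc \<mu> (Sh (- \<sigma>) \<odot> H))"
  unfolding opdefs P_def H_def K_def D_def C1_def C2_def E_def opP_def opH_def opK_def opD_def opC1_def opC2_def opE_def
  apply (intro allI impI)
  apply (simp only: id_apply Dt_add Dt_sub Dt_cmult Dx_add Dx_sub Dx_cmult Dt_X Dt_T Dx_X Dx_T dt_Sh dx_Sh Dx_Dt
     sm_X sm_T sm_Sh sm_Dt sm_Dx sm_add sm_sub sm_cmult)
  apply (rule ext)
  using assms(1) by (clarsimp simp: evdefs; (simp add: field_simps)?; algebra?)

lemma L2: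
  fixes \<mu> \<nu> \<sigma> :: real
  assumes "\<sigma> \<noteq> 0"
  defines "P \<equiv> opP" and "H \<equiv> opH" and "K \<equiv> opK \<mu> \<nu> \<sigma>" and "D \<equiv> opD \<sigma>"
      and "C1 \<equiv> opC1 \<mu> \<nu> \<sigma>" and "C2 \<equiv> opC2 \<mu> \<nu> \<sigma>" and "E \<equiv> opE \<mu> \<nu> \<sigma>"
  shows "(comm H P \<doteq> (\<lambda>\<Phi> p. 0))"
  unfolding opdefs P_def H_def K_def D_def C1_def C2_def E_def opP_def opH_def opK_def opD_def opC1_def opC2_def opE_def
  apply (intro allI impI)
  apply (simp only: id_apply Dt_add Dt_sub Dt_cmult Dx_add Dx_sub Dx_cmult Dt_X Dt_T Dx_X Dx_T dt_Sh dx_Sh Dx_Dt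
     sm_X sm_T sm_Sh sm_Dt sm_Dx sm_add sm_sub sm_cmult)
  apply (rule ext)
  using assms(1) by (clarsimp simp: evdefs; (simp add: field_simps)?; algebra?)

lemma L3:
  fixes \<mu> \<nu> \<sigma> :: real
  assumes "\<sigma> \<noteq> 0"
  defines "P \<equiv> opP" and "H \<equiv> opH" and "K \<equiv> opK \<mu> \<nu> \<sigma>" and "D \<equiv> opD \<sigma>"
      and "C1 \<equiv> opC1 \<mu> \<nu> \<sigma>" and "C2 \<equiv> opC2 \<mu> \<nu> \<sigma>" and "E \<equiv> opE \<mu> \<nu> \<sigma>"
  shows "(comm K D \<doteq> (\<lambda>\<Phi> p. 0))"
  unfolding opdefs P_def H_def K_def D_def C1_def C2_def E_def opP_def opH_def opK_def opD_def opC1_def opC2_def opE_def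
  apply (intro allI impI)
  apply (simp only: id_apply Dt_add Dt_sub Dt_cmult Dx_add Dx_sub Dx_cmult Dt_X Dt_T Dx_X Dx_T dt_Sh dx_Sh Dx_Dt
     sm_X sm_T sm_Sh sm_Dt sm_Dx sm_add sm_sub sm_cmult)
  apply (rule ext)
  using assms(1) by (clarsimp simp: evdefs; (simp add: field_simps)?; algebra?)

lemma L4:
  fixes \<mu> \<nu> \<sigma> :: real
  assumes "\<sigma> \<noteq> 0"
  defines "P \<equiv> opP" and "H \<equiv> opH" and "K \<equiv> opK \<mu> \<nu> \<sigma>" and "D \<equiv> opD \<sigma>"
      and "C1 \<equiv> opC1 \<mu> \<nu> \<sigma>" and "C2 \<equiv> opC2 \<mu> \<nu> \<sigma>" and "E \<equiv> opE \<mu> \<nu> \<sigma>"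
  shows "(comm D H \<doteq> H)"
  unfolding opdefs P_def H_def K_def D_def C1_def C2_def E_def opP_def opH_def opK_def opD_def opC1_def opC2_def opE_def
  apply (intro allI impI)
  apply (simp only: id_apply Dt_add Dt_sub Dt_cmult Dx_add Dx_sub Dx_cmult Dt_X Dt_T Dx_X Dx_T dt_Sh dx_Sh Dx_Dt
     sm_X sm_T sm_Sh sm_Dt sm_Dx sm_add sm_sub sm_cmult)
  apply (rule ext)
  using assms(1) by (clarsimp simp: evdefs; (simp add: field_simps)?; algebra?)

lemma L5:
  fixes \<mu> \<nu> \<sigma> :: real
  assumes "\<sigma> \<noteq> 0"
  defines "P \<equiv> opP" and "H \<equiv> opH" and "K \<equiv> opK \<mu> \<nu> \<sigma>" and "D \<equiv> opD \<sigma>"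
      and "C1 \<equiv> opC1 \<mu> \<nu> \<sigma>" and "C2 \<equiv> opC2 \<mu> \<nu> \<sigma>" and "E \<equiv> opE \<mu> \<nu> \<sigma>"
  shows "(comm D C1 \<doteq> sc (- 1) C1)"
  unfolding opdefs P_def H_def K_def D_def C1_def C2_def E_def opP_def opH_def opK_def opD_def opC1_def opC2_def opE_def
  apply (intro allI impI)
  apply (simp only: id_apply Dt_add Dt_sub Dt_cmult Dx_add Dx_sub Dx_cmult Dt_X Dt_T Dx_X Dx_T dt_Sh dx_Sh Dx_Dt
     sm_X sm_T sm_Sh sm_Dt sm_Dx sm_add sm_sub sm_cmult)
  apply (rule ext)
  using assms(1) by (clarsimp simp: evdefs; (simp add: field_simps)?; algebra?)

lemma L6:
  fixes \<mu> \<nu> \<sigma> :: real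
  assumes "\<sigma> \<noteq> 0"
  defines "P \<equiv> opP" and "H \<equiv> opH" and "K \<equiv> opK \<mu> \<nu> \<sigma>" and "D \<equiv> opD \<sigma>"
      and "C1 \<equiv> opC1 \<mu> \<nu> \<sigma>" and "C2 \<equiv> opC2 \<mu> \<nu> \<sigma>" and "E \<equiv> opE \<mu> \<nu> \<sigma>"
  shows "(comm H C1 \<doteq> sc (- 2 * \<nu>) D)"
  unfolding opdefs P_def H_def K_def D_def C1_def C2_def E_def opP_def opH_def opK_def opD_def opC1_def opC2_def opE_def
  apply (intro allI impI)
  apply (simp only: id_apply Dt_add Dt_sub Dt_cmult Dx_add Dx_sub Dx_cmult Dt_X Dt_T Dx_X Dx_T dt_Sh dx_Sh Dx_Dt
     sm_X sm_T sm_Sh sm_Dt sm_Dx sm_add sm_sub sm_cmult)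
  apply (rule ext)
  using assms(1) by (clarsimp simp: evdefs; (simp add: field_simps)?; algebra?)

lemma L7:
  fixes \<mu> \<nu> \<sigma> :: real
  assumes "\<sigma> \<noteq> 0"
  defines "P \<equiv> opP" and "H \<equiv> opH" and "K \<equiv> opK \<mu> \<nu> \<sigma>" and "D \<equiv> opD \<sigma>"
      and "C1 \<equiv> opC1 \<mu> \<nu> \<sigma>" and "C2 \<equiv> opC2 \<mu> \<nu> \<sigma>" and "E \<equiv> opE \<mu> \<nu> \<sigma>"
  shows "(comm D P \<doteq> sc (1 / \<sigma>) (id \<ominus> Sh (- \<sigma>)))"
  unfolding opdefs P_def H_def K_def D_def C1_def C2_def E_def opP_def opH_def opK_def opD_def opC1_def opC2_def opE_def
  apply (intro allI impI)
  apply (simp only: id_apply Dt_add Dt_sub Dt_cmult Dx_add Dx_sub Dx_cmult Dt_X Dt_T Dx_X Dx_T dt_Sh dx_Sh Dx_Dt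
     sm_X sm_T sm_Sh sm_Dt sm_Dx sm_add sm_sub sm_cmult)
  apply (rule ext)
  using assms(1) by (clarsimp simp: evdefs; (simp add: field_simps)?; algebra?)

lemma L8:
  fixes \<mu> \<nu> \<sigma> :: real
  assumes "\<sigma> \<noteq> 0"
  defines "P \<equiv> opP" and "H \<equiv> opH" and "K \<equiv> opK \<mu> \<nu> \<sigma>" and "D \<equiv> opD \<sigma>"
      and "C1 \<equiv> opC1 \<mu> \<nu> \<sigma>" and "C2 \<equiv> opC2 \<mu> \<nu> \<sigma>" and "E \<equiv> opE \<mu> \<nu> \<sigma>"
  shows "(comm D C2 \<doteq> sc (- 1) C2 \<ominus> sc (\<sigma> * \<mu>) (D \<odot> D))"
  unfolding opdefs P_def H_def K_def D_def C1_def C2_def E_def opP_def opH_def opK_def opD_def opC1_def opC2_def opE_def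
  apply (intro allI impI)
  apply (simp only: id_apply Dt_add Dt_sub Dt_cmult Dx_add Dx_sub Dx_cmult Dt_X Dt_T Dx_X Dx_T dt_Sh dx_Sh Dx_Dt
     sm_X sm_T sm_Sh sm_Dt sm_Dx sm_add sm_sub sm_cmult)
  apply (rule ext)
  using assms(1) by (clarsimp simp: evdefs; (simp add: field_simps)?; algebra?)

lemma L9:
  fixes \<mu> \<nu> \<sigma> :: real
  assumes "\<sigma> \<noteq> 0"
  defines "P \<equiv> opP" and "H \<equiv> opH" and "K \<equiv> opK \<mu> \<nu> \<sigma>" and "D \<equiv> opD \<sigma>"
      and "C1 \<equiv> opC1 \<mu> \<nu> \<sigma>" and "C2 \<equiv> opC2 \<mu> \<nu> \<sigma>" and "E \<equiv> opE \<mu> \<nu> \<sigma>"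
  shows "(comm P C2 \<doteq> sc (2 * \<mu>) D)"
  unfolding opdefs P_def H_def K_def D_def C1_def C2_def E_def opP_def opH_def opK_def opD_def opC1_def opC2_def opE_def
  apply (intro allI impI)
  apply (simp only: id_apply Dt_add Dt_sub Dt_cmult Dx_add Dx_sub Dx_cmult Dt_X Dt_T Dx_X Dx_T dt_Sh dx_Sh Dx_Dt
     sm_X sm_T sm_Sh sm_Dt sm_Dx sm_add sm_sub sm_cmult)
  apply (rule ext)
  using assms(1) by (clarsimp simp: evdefs; (simp add: field_simps)?; algebra?)

lemma L10:
  fixes \<mu> \<nu> \<sigma> :: real
  assumes "\<sigma> \<noteq> 0"
  defines "P \<equiv> opP" and "H \<equiv> opH" and "K \<equiv> opK \<mu> \<nu> \<sigma>" and "D \<equiv> opD \<sigma>"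
      and "C1 \<equiv> opC1 \<mu> \<nu> \<sigma>" and "C2 \<equiv> opC2 \<mu> \<nu> \<sigma>" and "E \<equiv> opE \<mu> \<nu> \<sigma>"
  shows "(comm K C1 \<doteq> sc \<nu> C2 \<oplus> sc (\<sigma> * \<mu> * \<nu>) (D \<odot> D))"
  unfolding opdefs P_def H_def K_def D_def C1_def C2_def E_def opP_def opH_def opK_def opD_def opC1_def opC2_def opE_def
  apply (intro allI impI)
  apply (simp only: id_apply Dt_add Dt_sub Dt_cmult Dx_add Dx_sub Dx_cmult Dt_X Dt_T Dx_X Dx_T dt_Sh dx_Sh Dx_Dt
     sm_X sm_T sm_Sh sm_Dt sm_Dx sm_add sm_sub sm_cmult)
  apply (rule ext)
  using assms(1) by (clarsimp simp: evdefs; (simp add: field_simps)?; algebra?)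

lemma L11:
  fixes \<mu> \<nu> \<sigma> :: real
  assumes "\<sigma> \<noteq> 0"
  defines "P \<equiv> opP" and "H \<equiv> opH" and "K \<equiv> opK \<mu> \<nu> \<sigma>" and "D \<equiv> opD \<sigma>"
      and "C1 \<equiv> opC1 \<mu> \<nu> \<sigma>" and "C2 \<equiv> opC2 \<mu> \<nu> \<sigma>" and "E \<equiv> opE \<mu> \<nu> \<sigma>"
  shows "(comm K C2 \<doteq> sc \<mu> C1)"
  unfolding opdefs P_def H_def K_def D_def C1_def C2_def E_def opP_def opH_def opK_def opD_def opC1_def opC2_def opE_def
  apply (intro allI impI)
  apply (simp only: id_apply Dt_add Dt_sub Dt_cmult Dx_add Dx_sub Dx_cmult Dt_X Dt_T Dx_X Dx_T dt_Sh dx_Sh Dx_Dt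
     sm_X sm_T sm_Sh sm_Dt sm_Dx sm_add sm_sub sm_cmult)
  apply (rule ext)
  using assms(1) by (clarsimp simp: evdefs; (simp add: field_simps)?; algebra?)

lemma L12:
  fixes \<mu> \<nu> \<sigma> :: real
  assumes "\<sigma> \<noteq> 0"
  defines "P \<equiv> opP" and "H \<equiv> opH" and "K \<equiv> opK \<mu> \<nu> \<sigma>" and "D \<equiv> opD \<sigma>"
      and "C1 \<equiv> opC1 \<mu> \<nu> \<sigma>" and "C2 \<equiv> opC2 \<mu> \<nu> \<sigma>" and "E \<equiv> opE \<mu> \<nu> \<sigma>"
  shows "(comm P C1 \<doteq> sc (- 1) (Sh (- \<sigma>) \<odot> K \<oplus> K \<odot> Sh (- \<sigma>)))"
  unfolding opdefs P_def H_def K_def D_def C1_def C2_def E_def opP_def opH_def opK_def opD_def opC1_def opC2_def opE_def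
  apply (intro allI impI)
  apply (simp only: id_apply Dt_add Dt_sub Dt_cmult Dx_add Dx_sub Dx_cmult Dt_X Dt_T Dx_X Dx_T dt_Sh dx_Sh Dx_Dt
     sm_X sm_T sm_Sh sm_Dt sm_Dx sm_add sm_sub sm_cmult)
  apply (rule ext)
  using assms(1) by (clarsimp simp: evdefs; (simp add: field_simps)?; algebra?)

lemma L13:
  fixes \<mu> \<nu> \<sigma> :: real
  assumes "\<sigma> \<noteq> 0"
  defines "P \<equiv> opP" and "H \<equiv> opH" and "K \<equiv> opK \<mu> \<nu> \<sigma>" and "D \<equiv> opD \<sigma>"
      and "C1 \<equiv> opC1 \<mu> \<nu> \<sigma>" and "C2 \<equiv> opC2 \<mu> \<nu> \<sigma>" and "E \<equiv> opE \<mu> \<nu> \<sigma>"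
  shows "(comm H C2 \<doteq> sc 2 K \<oplus> sc (\<sigma> * \<mu>) (D \<odot> H \<oplus> H \<odot> D))"
  unfolding opdefs P_def H_def K_def D_def C1_def C2_def E_def opP_def opH_def opK_def opD_def opC1_def opC2_def opE_def
  apply (intro allI impI)
  apply (simp only: id_apply Dt_add Dt_sub Dt_cmult Dx_add Dx_sub Dx_cmult Dt_X Dt_T Dx_X Dx_T dt_Sh dx_Sh Dx_Dt
     sm_X sm_T sm_Sh sm_Dt sm_Dx sm_add sm_sub sm_cmult)
  apply (rule ext)
  using assms(1) by (clarsimp simp: evdefs; (simp add: field_simps)?; algebra?)

lemma L14:
  fixes \<mu> \<nu> \<sigma> :: real
  assumes "\<sigma> \<noteq> 0"
  defines "P \<equiv> opP" and "H \<equiv> opH" and "K \<equiv> opK \<mu> \<nu> \<sigma>" and "D \<equiv> opD \<sigma>"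
      and "C1 \<equiv> opC1 \<mu> \<nu> \<sigma>" and "C2 \<equiv> opC2 \<mu> \<nu> \<sigma>" and "E \<equiv> opE \<mu> \<nu> \<sigma>"
  shows "(comm C1 C2 \<doteq> sc (- \<sigma> * \<mu>) (D \<odot> C1 \<oplus> C1 \<odot> D))"
  unfolding opdefs P_def H_def K_def D_def C1_def C2_def E_def opP_def opH_def opK_def opD_def opC1_def opC2_def opE_def
  apply (intro allI impI)
  apply (simp only: id_apply Dt_add Dt_sub Dt_cmult Dx_add Dx_sub Dx_cmult Dt_X Dt_T Dx_X Dx_T dt_Sh dx_Sh Dx_Dt
     sm_X sm_T sm_Sh sm_Dt sm_Dx sm_add sm_sub sm_cmult)
  apply (rule ext)
  using assms(1) by (clarsimp simp: evdefs; (simp add: field_simps)?; algebra?)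

lemma L15:
  fixes \<mu> \<nu> \<sigma> :: real
  assumes "\<sigma> \<noteq> 0"
  defines "P \<equiv> opP" and "H \<equiv> opH" and "K \<equiv> opK \<mu> \<nu> \<sigma>" and "D \<equiv> opD \<sigma>"
      and "C1 \<equiv> opC1 \<mu> \<nu> \<sigma>" and "C2 \<equiv> opC2 \<mu> \<nu> \<sigma>" and "E \<equiv> opE \<mu> \<nu> \<sigma>"
  shows "(comm E K \<doteq> (\<lambda>\<Phi> p. 0))"
  unfolding opdefs P_def H_def K_def D_def C1_def C2_def E_def opP_def opH_def opK_def opD_def opC1_def opC2_def opE_def
  apply (intro allI impI)
  apply (simp only: id_apply Dt_add Dt_sub Dt_cmult Dx_add Dx_sub Dx_cmult Dt_X Dt_T Dx_X Dx_T dt_Sh dx_Sh Dx_Dt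
     sm_X sm_T sm_Sh sm_Dt sm_Dx sm_add sm_sub sm_cmult)
  apply (rule ext)
  using assms(1) by (clarsimp simp: evdefs; (simp add: field_simps)?; algebra?)

lemma L16:
  fixes \<mu> \<nu> \<sigma> :: real
  assumes "\<sigma> \<noteq> 0"
  defines "P \<equiv> opP" and "H \<equiv> opH" and "K \<equiv> opK \<mu> \<nu> \<sigma>" and "D \<equiv> opD \<sigma>"
      and "C1 \<equiv> opC1 \<mu> \<nu> \<sigma>" and "C2 \<equiv> opC2 \<mu> \<nu> \<sigma>" and "E \<equiv> opE \<mu> \<nu> \<sigma>"
  shows "(comm E P \<doteq> (\<lambda>\<Phi> p. 0))"
  unfolding opdefs P_def H_def K_def D_def C1_def C2_def E_def opP_def opH_def opK_def opD_def opC1_def opC2_def opE_def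
  apply (intro allI impI)
  apply (simp only: id_apply Dt_add Dt_sub Dt_cmult Dx_add Dx_sub Dx_cmult Dt_X Dt_T Dx_X Dx_T dt_Sh dx_Sh Dx_Dt
     sm_X sm_T sm_Sh sm_Dt sm_Dx sm_add sm_sub sm_cmult)
  apply (rule ext)
  using assms(1) by (clarsimp simp: evdefs; (simp add: field_simps)?; algebra?)

lemma L17:
  fixes \<mu> \<nu> \<sigma> :: real
  assumes "\<sigma> \<noteq> 0"
  defines "P \<equiv> opP" and "H \<equiv> opH" and "K \<equiv> opK \<mu> \<nu> \<sigma>" and "D \<equiv> opD \<sigma>"
      and "C1 \<equiv> opC1 \<mu> \<nu> \<sigma>" and "C2 \<equiv> opC2 \<mu> \<nu> \<sigma>" and "E \<equiv> opE \<mu> \<nu> \<sigma>"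
  shows "(comm E H \<doteq> (\<lambda>\<Phi> p. 0))"
  unfolding opdefs P_def H_def K_def D_def C1_def C2_def E_def opP_def opH_def opK_def opD_def opC1_def opC2_def opE_def
  apply (intro allI impI)
  apply (simp only: id_apply Dt_add Dt_sub Dt_cmult Dx_add Dx_sub Dx_cmult Dt_X Dt_T Dx_X Dx_T dt_Sh dx_Sh Dx_Dt
     sm_X sm_T sm_Sh sm_Dt sm_Dx sm_add sm_sub sm_cmult)
  apply (rule ext)
  using assms(1) by (clarsimp simp: evdefs; (simp add: field_simps)?; algebra?)

lemma L18:
  fixes \<mu> \<nu> \<sigma> :: real
  assumes "\<sigma> \<noteq> 0"
  defines "P \<equiv> opP" and "H \<equiv> opH" and "K \<equiv> opK \<mu> \<nu> \<sigma>" and "D \<equiv> opD \<sigma>"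
      and "C1 \<equiv> opC1 \<mu> \<nu> \<sigma>" and "C2 \<equiv> opC2 \<mu> \<nu> \<sigma>" and "E \<equiv> opE \<mu> \<nu> \<sigma>"
  shows "(comm E D \<doteq> sc (- 2) E)"
  unfolding opdefs P_def H_def K_def D_def C1_def C2_def E_def opP_def opH_def opK_def opD_def opC1_def opC2_def opE_def
  apply (intro allI impI)
  apply (simp only: id_apply Dt_add Dt_sub Dt_cmult Dx_add Dx_sub Dx_cmult Dt_X Dt_T Dx_X Dx_T dt_Sh dx_Sh Dx_Dt
     sm_X sm_T sm_Sh sm_Dt sm_Dx sm_add sm_sub sm_cmult)
  apply (rule ext)
  using assms(1) by (clarsimp simp: evdefs; (simp add: field_simps)?; algebra?)

lemma L19:
  fixes \<mu> \<nu> \<sigma> :: real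
  assumes "\<sigma> \<noteq> 0"
  defines "P \<equiv> opP" and "H \<equiv> opH" and "K \<equiv> opK \<mu> \<nu> \<sigma>" and "D \<equiv> opD \<sigma>"
      and "C1 \<equiv> opC1 \<mu> \<nu> \<sigma>" and "C2 \<equiv> opC2 \<mu> \<nu> \<sigma>" and "E \<equiv> opE \<mu> \<nu> \<sigma>"
  shows "(comm E C1 \<doteq> sc (4 * \<nu>) (T \<odot> E))"
  unfolding opdefs P_def H_def K_def D_def C1_def C2_def E_def opP_def opH_def opK_def opD_def opC1_def opC2_def opE_def
  apply (intro allI impI)
  apply (simp only: id_apply Dt_add Dt_sub Dt_cmult Dx_add Dx_sub Dx_cmult Dt_X Dt_T Dx_X Dx_T dt_Sh dx_Sh Dx_Dt
     sm_X sm_T sm_Sh sm_Dt sm_Dx sm_add sm_sub sm_cmult)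
  apply (rule ext)
  using assms(1) by (clarsimp simp: evdefs; (simp add: field_simps)?; algebra?)

lemma L20:
  fixes \<mu> \<nu> \<sigma> :: real
  assumes "\<sigma> \<noteq> 0"
  defines "P \<equiv> opP" and "H \<equiv> opH" and "K \<equiv> opK \<mu> \<nu> \<sigma>" and "D \<equiv> opD \<sigma>"
      and "C1 \<equiv> opC1 \<mu> \<nu> \<sigma>" and "C2 \<equiv> opC2 \<mu> \<nu> \<sigma>" and "E \<equiv> opE \<mu> \<nu> \<sigma>"
  shows "(comm E C2 \<doteq> sc (- 4 * \<mu>) ((X \<oplus> sc \<sigma> id \<oplus> sc \<sigma> (T \<odot> Dt)) \<odot> E))"
  unfolding opdefs P_def H_def K_def D_def C1_def C2_def E_def opP_def opH_def opK_def opD_def opC1_def opC2_def opE_def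
  apply (intro allI impI)
  apply (simp only: id_apply Dt_add Dt_sub Dt_cmult Dx_add Dx_sub Dx_cmult Dt_X Dt_T Dx_X Dx_T dt_Sh dx_Sh Dx_Dt
     sm_X sm_T sm_Sh sm_Dt sm_Dx sm_add sm_sub sm_cmult)
  apply (rule ext)
  using assms(1) by (clarsimp simp: evdefs; (simp add: field_simps)?; algebra?)

lemma Dt0: "Dt (\<lambda>p. 0) = (\<lambda>p. 0)" by (simp add: Dt_def fun_eq_iff)
lemma Dx0: "Dx (\<lambda>p. 0) = (\<lambda>p. 0)" by (simp add: Dx_def fun_eq_iff)

lemma solgen: "(\<forall>\<Phi>. smooth2 \<Phi> \<longrightarrow> comm E B \<Phi> = R \<Phi>) \<Longrightarrow> smooth2 \<Phi> \<Longrightarrow> E \<Phi> = (\<lambda>p. 0) \<Longrightarrow> B (\<lambda>p. 0) = (\<lambda>p. 0)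
   \<Longrightarrow> R \<Phi> = (\<lambda>p. 0) \<Longrightarrow> E (B \<Phi>) = (\<lambda>p. 0)"
proof -
  assume h: "\<forall>\<Phi>. smooth2 \<Phi> \<longrightarrow> comm E B \<Phi> = R \<Phi>" and s: "smooth2 \<Phi>" and e: "E \<Phi> = (\<lambda>p. 0)"
    and b: "B (\<lambda>p. 0) = (\<lambda>p. 0)" and r: "R \<Phi> = (\<lambda>p. 0)"
  have "E (B \<Phi>) = (\<lambda>p. comm E B \<Phi> p + B (E \<Phi>) p)" by (simp add: comm_def osub_def ocomp_def)
  then show ?thesis using h s e b r by simp
qed

theorem mainTheorem5:
  fixes \<mu> \<nu> \<sigma> :: real
  assumes "\<sigma> \<noteq> 0"
  defines "P \<equiv> opP" and "H \<equiv> opH" and "K \<equiv> opK \<mu> \<nu> \<sigma>" and "D \<equiv> opD \<sigma>"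
      and "C1 \<equiv> opC1 \<mu> \<nu> \<sigma>" and "C2 \<equiv> opC2 \<mu> \<nu> \<sigma>" and "E \<equiv> opE \<mu> \<nu> \<sigma>"
  shows
    "(comm K H \<doteq> sc (\<nu> / \<sigma>) (Sh \<sigma> \<ominus> id)) \<and>
     (comm K P \<doteq> sc \<mu> (Sh (- \<sigma>) \<odot> H)) \<and>
     (comm H P \<doteq> (\<lambda>\<Phi> p. 0)) \<and>
     (comm K D \<doteq> (\<lambda>\<Phi> p. 0)) \<and>
     (comm D H \<doteq> H) \<and>
     (comm D C1 \<doteq> sc (- 1) C1) \<and>
     (comm H C1 \<doteq> sc (- 2 * \<nu>) D) \<and>
     (comm D P \<doteq> sc (1 / \<sigma>) (id \<ominus> Sh (- \<sigma>))) \<and>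
     (comm D C2 \<doteq> sc (- 1) C2 \<ominus> sc (\<sigma> * \<mu>) (D \<odot> D)) \<and>
     (comm P C2 \<doteq> sc (2 * \<mu>) D) \<and>
     (comm K C1 \<doteq> sc \<nu> C2 \<oplus> sc (\<sigma> * \<mu> * \<nu>) (D \<odot> D)) \<and>
     (comm K C2 \<doteq> sc \<mu> C1) \<and>
     (comm P C1 \<doteq> sc (- 1) (Sh (- \<sigma>) \<odot> K \<oplus> K \<odot> Sh (- \<sigma>))) \<and>
     (comm H C2 \<doteq> sc 2 K \<oplus> sc (\<sigma> * \<mu>) (D \<odot> H \<oplus> H \<odot> D)) \<and>
     (comm C1 C2 \<doteq> sc (- \<sigma> * \<mu>) (D \<odot> C1 \<oplus> C1 \<odot> D)) \<and>
     (comm E K \<doteq> (\<lambda>\<Phi> p. 0)) \<and>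
     (comm E P \<doteq> (\<lambda>\<Phi> p. 0)) \<and>
     (comm E H \<doteq> (\<lambda>\<Phi> p. 0)) \<and>
     (comm E D \<doteq> sc (- 2) E) \<and>
     (comm E C1 \<doteq> sc (4 * \<nu>) (T \<odot> E)) \<and>
     (comm E C2 \<doteq> sc (- 4 * \<mu>) ((X \<oplus> sc \<sigma> id \<oplus> sc \<sigma> (T \<odot> Dt)) \<odot> E)) \<and>
     (\<forall>A \<in> {K, P, H, D, C1, C2}. \<forall>\<Phi>. smooth2 \<Phi> \<and> E \<Phi> = (\<lambda>p. 0) \<longrightarrow> E (A \<Phi>) = (\<lambda>p. 0))"
proof -
  note L = L0[OF assms(1)] L1[OF assms(1)] L2[OF assms(1)] L3[OF assms(1)] L4[OF assms(1)]
    L5[OF assms(1)] L6[OF assms(1)] L7[OF assms(1)] L8[OF assms(1)] L9[OF assms(1)]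
    L10[OF assms(1)] L11[OF assms(1)] L12[OF assms(1)] L13[OF assms(1)] L14[OF assms(1)]
    L15[OF assms(1)] L16[OF assms(1)] L17[OF assms(1)] L18[OF assms(1)] L19[OF assms(1)] L20[OF assms(1)]
  have last: "\<forall>A \<in> {opK \<mu> \<nu> \<sigma>, opP, opH, opD \<sigma>, opC1 \<mu> \<nu> \<sigma>, opC2 \<mu> \<nu> \<sigma>}. \<forall>\<Phi>. smooth2 \<Phi> \<and> opE \<mu> \<nu> \<sigma> \<Phi> = (\<lambda>p. 0) \<longrightarrow> opE \<mu> \<nu> \<sigma> (A \<Phi>) = (\<lambda>p. 0)"
  proof (intro ballI allI impI, elim conjE)
    fix A \<Phi> assume A: "A \<in> {opK \<mu> \<nu> \<sigma>, opP, opH, opD \<sigma>, opC1 \<mu> \<nu> \<sigma>, opC2 \<mu> \<nu> \<sigma>}" and s: "smooth2 \<Phi>" and e: "opE \<mu> \<nu> \<sigma> \<Phi> = (\<lambda>p. 0)"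
    have z: "\<And>c. (\<lambda>p. c * (0::real)) = (\<lambda>p. 0)" by simp
    show "opE \<mu> \<nu> \<sigma> (A \<Phi>) = (\<lambda>p. 0)"
      using A
    proof (elim insertE emptyE)
      assume a: "A = opK \<mu> \<nu> \<sigma>" show ?thesis unfolding a
        by (rule solgen[OF L(16)[unfolded eq_sm_def] s e]; simp add: opK_def opdefs evdefs Dt0 Dx0 e)
    next
      assume a: "A = opP" show ?thesis unfolding a
        by (rule solgen[OF L(17)[unfolded eq_sm_def] s e]; simp add: opP_def opdefs evdefs Dt0 Dx0 e)
    next
      assume a: "A = opH" show ?thesis unfolding a
        by (rule solgen[OF L(18)[unfolded eq_sm_def] s e]; simp add: opH_def opdefs evdefs Dt0 Dx0 e)
    next
      assume a: "A = opD \<sigma>" show ?thesis unfolding a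
        by (rule solgen[OF L(19)[unfolded eq_sm_def] s e]; simp add: opD_def opdefs evdefs Dt0 Dx0 e)
    next
      assume a: "A = opC1 \<mu> \<nu> \<sigma>" show ?thesis unfolding a
        by (rule solgen[OF L(20)[unfolded eq_sm_def] s e]; simp add: opC1_def opdefs evdefs Dt0 Dx0 e)
    next
      assume a: "A = opC2 \<mu> \<nu> \<sigma>" show ?thesis unfolding a
        by (rule solgen[OF L(21)[unfolded eq_sm_def] s e]; simp add: opC2_def opdefs evdefs Dt0 Dx0 e)
    qed
  qed
  show ?thesis unfolding P_def H_def K_def D_def C1_def C2_def E_def
    by (intro conjI) (rule L last)+
qed

end
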